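(* Let $p$ and $q$ be relatively prime positive integers, and let $\omega=e^{i\pi p/q}$ with $\omega\ne1$. Then $$\gamma(\omega)+\frac{\log(1-\omega)}{\omega}=\sum_{j=1}^{q}\omega^{j-1}E_{j,p,q}=\sum_{j=1}^{2q}\omega^{j-1}\log\frac{\Gamma\!\left(\frac{j+1}{2q}\right)}{\Gamma\!\left(\frac{j}{2q}\right)},$$ where $$E_{j,p,q}=\begin{cases}\log\dfrac{\Gamma\left(\frac{j+1}{q}\right)}{\Gamma\left(\frac jq\right)} & \text{if } p \text{ is even},\\[2ex] \log\dfrac{\Gamma\left(\frac{j+1}{2q}\right)\Gamma\left(\frac{j+q}{2q}\right)}{\Gamma\left(\frac{j}{2q}\right)\Gamma\left(\frac{j+q+1}{2q}\right)} & \text{if } p \text{ is odd}.\end{cases}$$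
   Context: $\gamma(z)=\sum_{n=1}^{\infty} z^{n-1}\left(\frac{1}{n}-\log\frac{n+1}{n}\right)$ for $|z|\le1$. $\log$ is the principal branch ($-\pi<\mathrm{Arg}\le\pi$), and $\Gamma$ is Euler's gamma function. *)

theory Defs
  imports "HOL-Analysis.Analysis"
begin

text \<open>gamma(z) = sum_{n>=1} z^(n-1) (1/n - log((n+1)/n)), indexed here by n+1 with n from 0.\<close>
definition gamma_fun :: "complex \<Rightarrow> complex" where
  "gamma_fun z = (\<Sum>n. z ^ n * complex_of_real (1 / real (Suc n) - ln (real (Suc (Suc n)) / real (Suc n))))"

definition E_coef :: "nat \<Rightarrow> nat \<Rightarrow> nat \<Rightarrow> real" where
  "E_coef j p q = (if even p
     then ln (Gamma (real (j + 1) / real q) / Gamma (real j / real q))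
     else ln ((Gamma (real (j + 1) / real (2*q)) * Gamma (real (j + q) / real (2*q))) /
              (Gamma (real j / real (2*q)) * Gamma (real (j + q + 1) / real (2*q)))))"

end

theory Submission
  imports Defs
begin
lemma seg_re_bound:
  fixes w :: complex and t :: real
  assumes "norm w = 1" "w \<noteq> 1" "0 \<le> t" "t \<le> 1"
  shows "Re (1 - of_real t * w) \<ge> 1 - max 0 (Re w)"
proof -
  have "Re (1 - of_real t * w) = 1 - t * Re w" by simp
  moreover have "t * Re w \<le> max 0 (Re w)"
  proof (cases "Re w \<ge> 0")
    case True then show ?thesis using assms by (simp add: mult_left_le_one_le)
  next
    case False then show ?thesis using assms by (simp add: mult_nonneg_nonpos)
  qed
  ultimately show ?thesis by simp
qed

lemma re_w_lt1:
  fixes w :: complex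
  assumes "norm w = 1" "w \<noteq> 1"
  shows "Re w < 1"
proof (rule ccontr)
  assume "\<not> Re w < 1"
  moreover have "Re w \<le> 1" using complex_Re_le_cmod[of w] assms by simp
  ultimately have "Re w = 1" by simp
  moreover have "(Re w)^2 + (Im w)^2 = 1" using assms by (simp add: cmod_def)
  ultimately have "Im w = 0" by simp
  with \<open>Re w = 1\<close> have "w = 1" by (simp add: complex_eq_iff)
  with assms show False by simp
qed

definition fL :: "nat \<Rightarrow> complex \<Rightarrow> complex" where
  "fL M z = (\<Sum>m<M. z ^ Suc m / of_nat (Suc m)) + Ln (1 - z)"

lemma fL_deriv:
  assumes "1 - z \<notin> \<real>\<^sub>\<le>\<^sub>0"
  shows "(fL M has_field_derivative (- (z ^ M) / (1 - z))) (at z)"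
proof -
  have z1: "z \<noteq> 1" using assms by auto
  have d1: "((\<lambda>z. \<Sum>m<M. z ^ Suc m / of_nat (Suc m)) has_field_derivative (\<Sum>m<M. z ^ m)) (at z)"
  proof (rule DERIV_sum)
    fix m assume "m \<in> {..<M}"
    show "((\<lambda>z. z ^ Suc m / of_nat (Suc m)) has_field_derivative z ^ m) (at z)"
      by (rule derivative_eq_intros refl | simp del: of_nat_Suc)+
  qed
  have d2: "((\<lambda>z. Ln (1 - z)) has_field_derivative (- inverse (1 - z))) (at z)"
  proof -
    have g: "((\<lambda>z. 1 - z) has_field_derivative (-1)) (at z)"
      by (auto intro!: derivative_eq_intros)
    have "((\<lambda>z. Ln (1 - z)) has_field_derivative inverse (1 - z) * (-1)) (at z)"
      by (rule DERIV_chain2[OF has_field_derivative_Ln[OF assms] g])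
    then show ?thesis by simp
  qed
  have "(fL M has_field_derivative ((\<Sum>m<M. z ^ m) + (- inverse (1 - z)))) (at z)"
    unfolding fL_def[abs_def] by (rule DERIV_add[OF d1 d2])
  moreover have "(\<Sum>m<M. z ^ m) + (- inverse (1 - z)) = - (z ^ M) / (1 - z)"
  proof -
    have nz: "1 - z \<noteq> 0" using z1 by simp
    have "(\<Sum>m<M. z ^ m) = (1 - z ^ M) / (1 - z)" using z1 by (simp add: sum_gp_strict)
    also have "\<dots> + (- inverse (1 - z)) = ((1 - z ^ M) - 1) / (1 - z)"
      by (simp add: inverse_eq_divide diff_divide_distrib)
    finally show ?thesis by simp
  qed
  ultimately show ?thesis by simp
qed

lemma seg_bound:
  fixes w :: complex
  assumes w: "norm w = 1" "w \<noteq> 1" and st: "0 \<le> s" "s \<le> t" "t \<le> 1"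
  shows "norm (fL M (of_real t * w) - fL M (of_real s * w)) \<le> t ^ M / (1 - max 0 (Re w)) * (t - s)"
proof -
  define \<delta> where "\<delta> = 1 - max 0 (Re w)"
  have dpos: "\<delta> > 0" using re_w_lt1[OF w] by (simp add: \<delta>_def)
  let ?S = "closed_segment (of_real s * w) (of_real t * w)"
  have mem: "\<exists>u. s \<le> u \<and> u \<le> t \<and> z = of_real u * w" if "z \<in> ?S" for z
  proof -
    have "\<exists>v. 0 \<le> v \<and> v \<le> 1 \<and> z = (1 - v) *\<^sub>R (of_real s * w) + v *\<^sub>R (of_real t * w)"
      using that by (simp only: in_segment(1))
    then obtain v where v: "0 \<le> v" "v \<le> 1" "z = (1 - v) *\<^sub>R (of_real s * w) + v *\<^sub>R (of_real t * w)"
      by blast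
    have "z = of_real ((1 - v) * s + v * t) * w" using v(3) by (simp add: scaleR_conv_of_real distrib_right)
    moreover have "s \<le> (1 - v) * s + v * t"
    proof -
      have "v * s \<le> v * t" using v st by (intro mult_left_mono) auto
      then show ?thesis by (simp add: algebra_simps)
    qed
    moreover have "(1 - v) * s + v * t \<le> t" using v st
    proof -
      have "(1 - v) * s \<le> (1 - v) * t" using v st by (intro mult_left_mono) auto
      then show ?thesis by (simp add: algebra_simps)
    qed
    ultimately show ?thesis by blast
  qed
  have key: "1 - z \<notin> \<real>\<^sub>\<le>\<^sub>0 \<and> norm (- (z ^ M) / (1 - z)) \<le> t ^ M / \<delta>" if zS: "z \<in> ?S" for z
  proof -
    obtain u where u: "s \<le> u" "u \<le> t" "z = of_real u * w" using mem[OF zS] by blast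
    have re: "Re (1 - z) \<ge> \<delta>" unfolding \<delta>_def u(3) using seg_re_bound[OF w, of u] u st by simp
    have "1 - z \<notin> \<real>\<^sub>\<le>\<^sub>0" using re dpos by (auto simp: complex_nonpos_Reals_iff)
    moreover have "norm (1 - z) \<ge> \<delta>" using re complex_Re_le_cmod[of "1 - z"] by linarith
    moreover have "norm z = u" using u st w by (simp add: norm_mult)
    moreover have "u ^ M \<le> t ^ M" using u st by (simp add: power_mono)
    ultimately have "norm (z ^ M) \<le> t ^ M" "norm (1 - z) \<ge> \<delta>" 
      by (auto simp: norm_power)
    then have "norm (- (z ^ M) / (1 - z)) \<le> t ^ M / \<delta>" using dpos
      using st by (simp add: norm_divide) (rule frac_le, auto)
    with \<open>1 - z \<notin> \<real>\<^sub>\<le>\<^sub>0\<close> show ?thesis by blast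
  qed
  have "norm (fL M (of_real t * w) - fL M (of_real s * w)) \<le> t ^ M / \<delta> * norm (of_real t * w - of_real s * w)"
  proof (rule field_differentiable_bound[where f' = "\<lambda>z. - (z ^ M) / (1 - z)"])
    show "convex ?S" by simp
    fix z assume "z \<in> ?S"
    with key show "(fL M has_field_derivative - (z ^ M) / (1 - z)) (at z within ?S)"
      by (blast intro: has_field_derivative_at_within fL_deriv)
    show "norm (- (z ^ M) / (1 - z)) \<le> t ^ M / \<delta>" using key \<open>z \<in> ?S\<close> by blast
  qed auto
  also have "norm (of_real t * w - of_real s * w) = t - s"
    using w st by (simp add: left_diff_distrib[symmetric] norm_mult of_real_diff[symmetric] del: of_real_diff)
  finally show ?thesis by (simp add: \<delta>_def)
qed

lemma fL_zero: "fL M 0 = 0"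
  by (simp add: fL_def)

lemma fL_lim:
  fixes w :: complex
  assumes w: "norm w = 1" "w \<noteq> 1"
  shows "(\<lambda>M. fL M w) \<longlonglongrightarrow> 0"
proof (rule LIMSEQ_I)
  fix \<epsilon> :: real assume ep: "\<epsilon> > 0"
  define \<delta> where "\<delta> = 1 - max 0 (Re w)"
  have dpos: "\<delta> > 0" using re_w_lt1[OF w] by (simp add: \<delta>_def)
  have bnd: "norm (fL M w) \<le> r ^ M / \<delta> * r + 1 / \<delta> * (1 - r)" if r: "0 \<le> r" "r \<le> 1" for r M
  proof -
    have 1: "norm (fL M (of_real r * w) - fL M (of_real 0 * w)) \<le> r ^ M / \<delta> * (r - 0)"
      using seg_bound[OF w, of 0 r M] r by (simp add: \<delta>_def)
    have 2: "norm (fL M (of_real 1 * w) - fL M (of_real r * w)) \<le> 1 ^ M / \<delta> * (1 - r)"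
      using seg_bound[OF w, of r 1 M] r by (simp add: \<delta>_def)
    have "norm (fL M w) \<le> norm (fL M (of_real 1 * w) - fL M (of_real r * w)) + norm (fL M (of_real r * w) - fL M (of_real 0 * w))"
      using norm_triangle_ineq[of "fL M (of_real 1 * w) - fL M (of_real r * w)" "fL M (of_real r * w) - fL M (of_real 0 * w)"]
      by (simp add: fL_zero)
    with 1 2 show ?thesis by simp
  qed
  define r where "r = max 0 (1 - \<epsilon> * \<delta> / 2)"
  have r0: "0 \<le> r" and r1: "r < 1" and r1': "1 - r \<le> \<epsilon> * \<delta> / 2"
    using ep dpos unfolding r_def by (auto simp: max_def)
  have "(\<lambda>n. r ^ n) \<longlonglongrightarrow> 0" using r0 r1 by (intro LIMSEQ_power_zero) simp
  then obtain M0 where M0: "\<And>M. M \<ge> M0 \<Longrightarrow> norm (r ^ M - 0) < \<epsilon> * \<delta> / 2"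
    using LIMSEQ_D[of "\<lambda>n. r ^ n" 0 "\<epsilon> * \<delta> / 2"] ep dpos by auto
  show "\<exists>no. \<forall>n\<ge>no. norm (fL n w - 0) < \<epsilon>"
  proof (intro exI allI impI)
    fix M assume "M \<ge> M0"
    then have rM: "r ^ M < \<epsilon> * \<delta> / 2" using M0 r0 by simp
    have "norm (fL M w) \<le> r ^ M / \<delta> * r + 1 / \<delta> * (1 - r)" using bnd r0 r1 by simp
    also have "r ^ M / \<delta> * r \<le> r ^ M / \<delta>"
    proof -
      have "r ^ M * r \<le> r ^ M" by (rule mult_left_le) (use r0 r1 in auto)
      then show ?thesis using dpos by (simp add: divide_right_mono)
    qed
    also have "r ^ M / \<delta> < \<epsilon> / 2" using rM dpos by (simp add: field_simps)
    also have "1 / \<delta> * (1 - r) \<le> \<epsilon> / 2" using r1' dpos by (simp add: field_simps)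
    finally show "norm (fL M w - 0) < \<epsilon>" by simp
  qed
qed

lemma log_series_lim:
  fixes w :: complex
  assumes w: "norm w = 1" "w \<noteq> 1"
  shows "(\<lambda>M. \<Sum>m<M. w ^ m / of_nat (Suc m)) \<longlonglongrightarrow> - Ln (1 - w) / w"
proof -
  have w0: "w \<noteq> 0" using w by (metis norm_zero zero_neq_one)
  have eq: "(\<Sum>m<M. w ^ m / of_nat (Suc m)) = (fL M w - Ln (1 - w)) / w" for M
    using w0 by (simp add: fL_def sum_divide_distrib)
  have "(\<lambda>M. (fL M w - Ln (1 - w)) / w) \<longlonglongrightarrow> (0 - Ln (1 - w)) / w"
    using w0 by (intro tendsto_intros fL_lim[OF w])
  then show ?thesis unfolding eq[symmetric] by simp
qed


lemma c_eq: "1 / real (Suc m) - ln (real (Suc (Suc m)) / real (Suc m))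
   = inverse (real (m+1)) + ln (real (m+1)) - ln (real (m+2))"
  by (simp add: ln_div inverse_eq_divide)

lemma c_nonneg: "0 \<le> 1 / real (Suc m) - ln (real (Suc (Suc m)) / real (Suc m))"
proof -
  have "real (Suc (Suc m)) / real (Suc m) = 1 + 1 / real (Suc m)"
    by (simp add: field_simps)
  moreover have "ln (1 + 1 / real (Suc m)) \<le> 1 / real (Suc m)"
    by (rule ln_add_one_self_le_self) simp
  ultimately show ?thesis by simp
qed

lemma gamma_fun_lim:
  fixes w :: complex
  assumes "norm w = 1"
  shows "(\<lambda>K. \<Sum>m<K. w ^ m * complex_of_real (1 / real (Suc m) - ln (real (Suc (Suc m)) / real (Suc m))))
           \<longlonglongrightarrow> gamma_fun w"
proof -
  let ?c = "\<lambda>m. 1 / real (Suc m) - ln (real (Suc (Suc m)) / real (Suc m))"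
  have ceq: "?c = (\<lambda>m. inverse (real (m+1)) + ln (real (m+1)) - ln (real (m+2)))"
    by (rule ext, rule c_eq)
  have "summable ?c"
    unfolding ceq by (rule sums_summable[OF euler_mascheroni_sum_real])
  moreover have "norm (w ^ m * complex_of_real (?c m)) = ?c m" for m
    by (simp only: norm_mult norm_power norm_of_real abs_of_nonneg[OF c_nonneg] assms power_one mult_1_left)
  ultimately have "summable (\<lambda>m. norm (w ^ m * complex_of_real (?c m)))" by simp
  then have "summable (\<lambda>m. w ^ m * complex_of_real (?c m))" by (rule summable_norm_cancel)
  then show ?thesis unfolding gamma_fun_def by (rule summable_LIMSEQ)
qed

definition dd :: "nat \<Rightarrow> real" where "dd m = ln (real (m + 2)) - ln (real (m + 1))"

definition DD :: "nat \<Rightarrow> nat \<Rightarrow> nat \<Rightarrow> real" where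
  "DD N j n = ln (real n) / real N - (\<Sum>k\<le>n. dd (k * N + j - 1))"

lemma DD_aux:
  fixes a b L P Q A B S M :: real
  assumes "S = P - Q + (A - B)" "a - b = 1 / M"
  shows "(a * L - P - A) - (b * L - Q - B) = L / M - S"
proof -
  have "a * L - b * L = (a - b) * L" by (simp add: algebra_simps)
  with assms show ?thesis by simp
qed

lemma DD_eq:
  assumes N: "N > 0" and j: "j \<ge> 1"
  shows "ln_Gamma_series (real (j + 1) / real N) n - ln_Gamma_series (real j / real N) n = DD N j n"
proof -
  have e: "ln (real (j + 1) / real N / real k + 1) - ln (real j / real N / real k + 1) = dd (k * N + j - 1)"
    if k: "k \<ge> 1" for k
  proof -
    have pos: "real k * real N > 0" using k N by simp
    have nz: "real k \<noteq> 0" "real N \<noteq> 0" using k N by auto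
    have 1: "real (j + 1) / real N / real k + 1 = real (k * N + j + 1) / (real k * real N)"
      using nz by (simp add: field_simps)
    have 2: "real j / real N / real k + 1 = real (k * N + j) / (real k * real N)"
      using nz by (simp add: field_simps)
    have "ln (real (k * N + j + 1) / (real k * real N)) - ln (real (k * N + j) / (real k * real N))
        = ln (real (k * N + j + 1)) - ln (real (k * N + j))"
    proof -
      have a: "0 < real (k * N + j + 1)" "0 < real (k * N + j)" using j by (simp_all only: of_nat_0_less_iff)
      have nz: "real (k * N + j + 1) \<noteq> 0 \<and> real k * real N \<noteq> 0" "real (k * N + j) \<noteq> 0 \<and> real k * real N \<noteq> 0"
        using a k N by simp_all
      show ?thesis by (simp only: ln_div if_P[OF nz(1)] if_P[OF nz(2)])
    qed
    moreover have "k * N + j - 1 + 2 = k * N + j + 1" "k * N + j - 1 + 1 = k * N + j" using j by auto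
    ultimately show ?thesis unfolding 1 2 dd_def by simp
  qed
  have e0: "ln (real (j + 1) / real N) - ln (real j / real N) = dd (0 * N + j - 1)"
  proof -
    have "ln (real (j + 1) / real N) - ln (real j / real N) = ln (real (j + 1)) - ln (real j)"
      using N j by (simp add: ln_div)
    moreover have "j - 1 + 2 = j + 1" "j - 1 + 1 = j" using j by auto
    ultimately show ?thesis unfolding dd_def by simp
  qed
  have "(\<Sum>k\<le>n. dd (k * N + j - 1)) = dd (0 * N + j - 1) + (\<Sum>k=1..n. dd (k * N + j - 1))"
    by (simp add: atMost_atLeast0 sum.atLeast_Suc_atMost)
  moreover have "(\<Sum>k=1..n. dd (k * N + j - 1)) =
      (\<Sum>k=1..n. ln (real (j + 1) / real N / real k + 1) - ln (real j / real N / real k + 1))"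
    using e by (intro sum.cong) auto
  ultimately have "(\<Sum>k\<le>n. dd (k * N + j - 1)) = ln (real (j + 1) / real N) - ln (real j / real N) +
      ((\<Sum>k=1..n. ln (real (j + 1) / real N / real k + 1)) - (\<Sum>k=1..n. ln (real j / real N / real k + 1)))"
    using e0 by (simp add: sum_subtractf)
  moreover have "real (j + 1) / real N - real j / real N = 1 / real N"
    by (simp add: diff_divide_distrib[symmetric])
  ultimately show ?thesis
    unfolding DD_def ln_Gamma_series_def by (rule DD_aux)
qed

lemma DD_lim:
  assumes N: "N > 0" and j: "j \<ge> 1"
  shows "(\<lambda>n. DD N j n) \<longlonglongrightarrow> ln_Gamma (real (j + 1) / real N) - ln_Gamma (real j / real N)"
proof -
  have "(\<lambda>n. ln_Gamma_series (real (j + 1) / real N) n - ln_Gamma_series (real j / real N) n)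
     \<longlonglongrightarrow> ln_Gamma (real (j + 1) / real N) - ln_Gamma (real j / real N)"
    using N j by (intro tendsto_diff ln_Gamma_real_LIMSEQ) auto
  then show ?thesis using DD_eq[OF N j] by simp
qed


lemma c_dd: "complex_of_real (1 / real (Suc m) - ln (real (Suc (Suc m)) / real (Suc m)))
   = 1 / of_nat (Suc m) - complex_of_real (dd m)"
proof -
  have "ln (real (Suc (Suc m)) / real (Suc m)) = dd m"
    unfolding dd_def by (simp add: ln_div)
  then show ?thesis by simp
qed

lemma w_pow_group:
  fixes w :: complex
  assumes "w ^ N = 1"
  shows "w ^ (k * N + i) = w ^ i"
proof -
  have "w ^ (k * N) = 1" by (simp add: power_mult mult.commute[of k N] assms)
  then show ?thesis by (simp add: power_add)
qed

lemma regroup: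
  fixes w :: complex
  assumes wN: "w ^ N = 1"
  shows "(\<Sum>k\<le>n. \<Sum>i<N. w ^ i * complex_of_real (dd (k * N + i)))
       = (\<Sum>m<Suc n * N. w ^ m * complex_of_real (dd m))"
proof -
  have "(\<Sum>k\<le>n. \<Sum>i<N. w ^ i * complex_of_real (dd (k * N + i)))
      = (\<Sum>k<Suc n. \<Sum>m\<in>{k * N..<k * N + N}. w ^ m * complex_of_real (dd m))"
  proof (rule sum.cong)
    show "{..n} = {..<Suc n}" by auto
  next
    fix k assume "k \<in> {..<Suc n}"
    have "(\<Sum>m\<in>{k * N..<k * N + N}. w ^ m * complex_of_real (dd m))
        = (\<Sum>i<N. w ^ (k * N + i) * complex_of_real (dd (k * N + i)))"
      using sum.shift_bounds_nat_ivl[of "\<lambda>m. w ^ m * complex_of_real (dd m)" 0 "k * N" N]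
      by (simp add: add.commute atLeast0LessThan)
    also have "\<dots> = (\<Sum>i<N. w ^ i * complex_of_real (dd (k * N + i)))"
      by (simp add: w_pow_group[OF wN])
    finally show "(\<Sum>i<N. w ^ i * complex_of_real (dd (k * N + i))) =
        (\<Sum>m\<in>{k * N..<k * N + N}. w ^ m * complex_of_real (dd m))" by simp
  qed
  also have "\<dots> = (\<Sum>m<Suc n * N. w ^ m * complex_of_real (dd m))"
    by (rule sum.nat_group)
  finally show ?thesis .
qed

lemma part1:
  fixes w :: complex and N :: nat
  assumes N: "N > 0" and w: "norm w = 1" "w \<noteq> 1" and wN: "w ^ N = 1"
  shows "gamma_fun w + Ln (1 - w) / w =
    (\<Sum>j=1..N. w ^ (j - 1) * complex_of_real (ln_Gamma (real (j + 1) / real N) - ln_Gamma (real j / real N)))"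
proof -
  define K where "K n = Suc n * N" for n
  have sm: "strict_mono K" unfolding K_def using N by (intro strict_monoI) simp
  let ?X = "\<lambda>M. \<Sum>m<M. w ^ m * complex_of_real (1 / real (Suc m) - ln (real (Suc (Suc m)) / real (Suc m)))"
  let ?Y = "\<lambda>M. \<Sum>m<M. w ^ m / of_nat (Suc m)"
  have L1: "(\<lambda>n. ?X (K n)) \<longlonglongrightarrow> gamma_fun w"
    using LIMSEQ_subseq_LIMSEQ[OF gamma_fun_lim[OF w(1)] sm] by (simp add: o_def)
  have L2: "(\<lambda>n. ?Y (K n)) \<longlonglongrightarrow> - Ln (1 - w) / w"
    using LIMSEQ_subseq_LIMSEQ[OF log_series_lim[OF w] sm] by (simp add: o_def)
  have L: "(\<lambda>n. ?X (K n) - ?Y (K n)) \<longlonglongrightarrow> gamma_fun w + Ln (1 - w) / w"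
    using tendsto_diff[OF L1 L2] by simp
  let ?R = "(\<Sum>j=1..N. w ^ (j - 1) * complex_of_real (ln_Gamma (real (j + 1) / real N) - ln_Gamma (real j / real N)))"
  have R: "(\<lambda>n. \<Sum>j=1..N. w ^ (j - 1) * complex_of_real (DD N j n)) \<longlonglongrightarrow> ?R"
    by (intro tendsto_sum tendsto_mult tendsto_const tendsto_of_real DD_lim N) auto
  have eqL: "?X M - ?Y M = - (\<Sum>m<M. w ^ m * complex_of_real (dd m))" for M
  proof -
    have "?X M - ?Y M = (\<Sum>m<M. w ^ m * complex_of_real (1 / real (Suc m) - ln (real (Suc (Suc m)) / real (Suc m))) - w ^ m / of_nat (Suc m))"
      by (simp add: sum_subtractf)
    also have "\<dots> = (\<Sum>m<M. - (w ^ m * complex_of_real (dd m)))"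
      by (intro sum.cong refl, unfold c_dd) (simp add: algebra_simps)
    finally show ?thesis by (simp add: sum_negf)
  qed
  have geo: "(\<Sum>i<N. w ^ i) = 0" using w(2) wN by (simp add: sum_gp_strict)
  have eqR: "(\<Sum>j=1..N. w ^ (j - 1) * complex_of_real (DD N j n)) = - (\<Sum>m<K n. w ^ m * complex_of_real (dd m))" for n
  proof -
    have "(\<Sum>j=1..N. w ^ (j - 1) * complex_of_real (DD N j n))
        = (\<Sum>i<N. w ^ i * complex_of_real (DD N (Suc i) n))"
      using sum.atLeast1_atMost_eq[of "\<lambda>j. w ^ (j - 1) * complex_of_real (DD N j n)" N] by simp
    also have "\<dots> = (\<Sum>i<N. w ^ i * complex_of_real (ln (real n) / real N)
                     - (\<Sum>k\<le>n. w ^ i * complex_of_real (dd (k * N + i))))"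
      unfolding DD_def by (intro sum.cong refl) (simp add: sum_distrib_left right_diff_distrib)
    also have "\<dots> = (\<Sum>i<N. w ^ i) * complex_of_real (ln (real n) / real N)
                     - (\<Sum>i<N. \<Sum>k\<le>n. w ^ i * complex_of_real (dd (k * N + i)))"
      by (simp only: sum_subtractf sum_distrib_right)
    also have "\<dots> = - (\<Sum>k\<le>n. \<Sum>i<N. w ^ i * complex_of_real (dd (k * N + i)))"
      using geo by (simp add: sum.swap[of _ "{..<N}"])
    also have "\<dots> = - (\<Sum>m<K n. w ^ m * complex_of_real (dd m))"
      unfolding K_def by (simp only: regroup[OF wN])
    finally show ?thesis .
  qed
  have "(\<lambda>n. ?X (K n) - ?Y (K n)) = (\<lambda>n. \<Sum>j=1..N. w ^ (j - 1) * complex_of_real (DD N j n))"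
    by (rule ext) (simp only: eqL eqR)
  with L have "(\<lambda>n. \<Sum>j=1..N. w ^ (j - 1) * complex_of_real (DD N j n)) \<longlonglongrightarrow> gamma_fun w + Ln (1 - w) / w"
    by simp
  from LIMSEQ_unique[OF this R] show ?thesis .
qed


lemma lnG: "x > 0 \<Longrightarrow> ln (Gamma x) = ln_Gamma (x::real)"
  by (simp add: ln_Gamma_real_pos)

lemma ln_Gamma_ratio:
  assumes "a > 0" "b > 0"
  shows "ln (Gamma a / Gamma b) = ln_Gamma a - ln_Gamma (b::real)"
  using assms by (simp add: ln_divide_pos lnG)

lemma ln_Gamma_ratio2:
  assumes "a > 0" "b > 0" "c > 0" "d > 0"
  shows "ln ((Gamma a * Gamma b) / (Gamma c * Gamma d)) = ln_Gamma a + ln_Gamma b - ln_Gamma c - ln_Gamma (d::real)"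
  using assms by (simp add: ln_divide_pos ln_mult_pos lnG)

lemma dup_real:
  fixes x :: real
  assumes x: "x > 0"
  shows "ln_Gamma x + ln_Gamma (x + 1/2) = (1 - 2 * x) * ln 2 + ln (sqrt pi) + ln_Gamma (2 * x)"
proof -
  have nz1: "complex_of_real x \<notin> \<int>\<^sub>\<le>\<^sub>0" using x by (auto simp: of_real_in_nonpos_Ints_iff)
  have nz2: "complex_of_real x + 1/2 \<notin> \<int>\<^sub>\<le>\<^sub>0"
  proof -
    have "complex_of_real x + 1/2 = complex_of_real (x + 1/2)" by simp
    then show ?thesis using x by (auto simp: of_real_in_nonpos_Ints_iff simp del: of_real_add)
  qed
  have "Gamma (complex_of_real x) * Gamma (complex_of_real x + 1/2) =
        exp ((1 - 2 * complex_of_real x) * of_real (ln 2)) * of_real (sqrt pi) * Gamma (2 * complex_of_real x)"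
    by (rule Gamma_legendre_duplication[OF nz1 nz2])
  also have "Gamma (complex_of_real x) * Gamma (complex_of_real x + 1/2) = complex_of_real (Gamma x * Gamma (x + 1/2))"
  proof -
    have "complex_of_real x + 1/2 = complex_of_real (x + 1/2)" by simp
    then show ?thesis by (simp only: Gamma_complex_of_real of_real_mult)
  qed
  also have "exp ((1 - 2 * complex_of_real x) * of_real (ln 2)) * of_real (sqrt pi) * Gamma (2 * complex_of_real x)
      = complex_of_real (exp ((1 - 2 * x) * ln 2) * sqrt pi * Gamma (2 * x))"
  proof -
    have a: "(1 - complex_of_real (2 * x)) * of_real (ln 2) = of_real ((1 - 2 * x) * ln 2)" by simp
    have b: "2 * complex_of_real x = of_real (2 * x)" by simp
    show ?thesis by (simp only: a b exp_of_real Gamma_complex_of_real of_real_mult[symmetric])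
  qed
  finally have eq: "Gamma x * Gamma (x + 1/2) = exp ((1 - 2 * x) * ln 2) * sqrt pi * Gamma (2 * x)"
    by (simp only: of_real_eq_iff)
  have "ln (Gamma x * Gamma (x + 1/2)) = ln_Gamma x + ln_Gamma (x + 1/2)"
    using x by (simp add: ln_mult_pos lnG)
  moreover have "ln (exp ((1 - 2 * x) * ln 2) * sqrt pi * Gamma (2 * x)) = (1 - 2 * x) * ln 2 + ln (sqrt pi) + ln_Gamma (2 * x)"
    using x by (simp add: ln_mult_pos lnG)
  ultimately show ?thesis using eq by simp
qed

lemma split_2q:
  fixes f :: "nat \<Rightarrow> complex"
  shows "(\<Sum>j=1..2*q. f j) = (\<Sum>j=1..q. f j + f (j + q))"
proof -
  have "(\<Sum>j=1..q+q. f j) = (\<Sum>j=1..q. f j) + (\<Sum>j=q+1..q+q. f j)"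
    by (rule sum.ub_add_nat) simp
  also have "(\<Sum>j=q+1..q+q. f j) = (\<Sum>j=1..q. f (j + q))"
    using sum.shift_bounds_cl_nat_ivl[of f 1 q q] by (simp add: add.commute)
  finally show ?thesis by (simp add: mult_2 sum.distrib)
qed

lemma part2:
  fixes w :: complex and p q :: nat
  assumes q: "q > 0" and wq: "w ^ q = (-1) ^ p" and w1: "w \<noteq> 1"
  shows "(\<Sum>j=1..q. w ^ (j - 1) * complex_of_real (E_coef j p q)) =
         (\<Sum>j=1..2*q. w ^ (j - 1) * complex_of_real
            (ln (Gamma (real (j + 1) / real (2*q)) / Gamma (real j / real (2*q)))))"
proof -
  define b where "b j = ln_Gamma (real (j + 1) / real (2*q)) - ln_Gamma (real j / real (2*q))" for j
  have rhs: "(\<Sum>j=1..2*q. w ^ (j - 1) * complex_of_real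
            (ln (Gamma (real (j + 1) / real (2*q)) / Gamma (real j / real (2*q)))))
      = (\<Sum>j=1..2*q. w ^ (j - 1) * complex_of_real (b j))"
    using q by (intro sum.cong refl) (auto simp: b_def ln_Gamma_ratio)
  also have "\<dots> = (\<Sum>j=1..q. w ^ (j - 1) * complex_of_real (b j) + w ^ (j + q - 1) * complex_of_real (b (j + q)))"
    by (rule split_2q)
  also have "\<dots> = (\<Sum>j=1..q. w ^ (j - 1) * complex_of_real (b j + (-1) ^ p * b (j + q)))"
  proof (intro sum.cong refl)
    fix j assume "j \<in> {1..q}"
    then have "j + q - 1 = (j - 1) + q" by simp
    then have "w ^ (j + q - 1) = w ^ (j - 1) * (-1) ^ p"
      using wq by (simp only: power_add)
    then show "w ^ (j - 1) * complex_of_real (b j) + w ^ (j + q - 1) * complex_of_real (b (j + q))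
        = w ^ (j - 1) * complex_of_real (b j + (-1) ^ p * b (j + q))"
      by (simp add: algebra_simps)
  qed
  finally have R: "(\<Sum>j=1..2*q. w ^ (j - 1) * complex_of_real
            (ln (Gamma (real (j + 1) / real (2*q)) / Gamma (real j / real (2*q)))))
      = (\<Sum>j=1..q. w ^ (j - 1) * complex_of_real (b j + (-1) ^ p * b (j + q)))" .
  show ?thesis
  proof (cases "even p")
    case False
    have "E_coef j p q = b j + (-1) ^ p * b (j + q)" if "j \<in> {1..q}" for j
      using False that q unfolding E_coef_def b_def
      by (subst ln_Gamma_ratio2) (auto simp: algebra_simps)
    then show ?thesis unfolding R by (intro sum.cong refl) simp
  next
    case True
    have geo: "(\<Sum>j=1..q. w ^ (j - 1)) = 0"
    proof -
      have "(\<Sum>j=1..q. w ^ (j - 1)) = (\<Sum>i<q. w ^ i)"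
        using sum.atLeast1_atMost_eq[of "\<lambda>j. w ^ (j - 1)" q] by simp
      also have "\<dots> = 0" using w1 wq True by (simp add: sum_gp_strict)
      finally show ?thesis .
    qed
    have Ej: "b j + (-1) ^ p * b (j + q) = E_coef j p q - ln 2 / real q" if "j \<in> {1..q}" for j
    proof -
      have j: "j \<ge> 1" using that by simp
      have d1: "ln_Gamma (real j / real (2*q)) + ln_Gamma (real (j + q) / real (2*q))
          = (1 - 2 * (real j / real (2*q))) * ln 2 + ln (sqrt pi) + ln_Gamma (real j / real q)"
      proof -
        have "real j / real (2*q) + 1/2 = real (j + q) / real (2*q)" "2 * (real j / real (2*q)) = real j / real q"
          using q by (simp_all add: field_simps)
        then show ?thesis using dup_real[of "real j / real (2*q)"] j q by simp
      qed
      have d2: "ln_Gamma (real (j + 1) / real (2*q)) + ln_Gamma (real (j + q + 1) / real (2*q))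
          = (1 - 2 * (real (j + 1) / real (2*q))) * ln 2 + ln (sqrt pi) + ln_Gamma (real (j + 1) / real q)"
      proof -
        have "real (j + 1) / real (2*q) + 1/2 = real (j + q + 1) / real (2*q)" "2 * (real (j + 1) / real (2*q)) = real (j + 1) / real q"
          using q by (simp_all add: field_simps)
        then show ?thesis using dup_real[of "real (j + 1) / real (2*q)"] j q by simp
      qed
      have "E_coef j p q = ln_Gamma (real (j + 1) / real q) - ln_Gamma (real j / real q)"
        unfolding E_coef_def using True j q by (simp add: ln_Gamma_ratio)
      moreover have "2 * (real (j + 1) / real (2*q)) - 2 * (real j / real (2*q)) = 1 / real q"
        using q by (simp add: field_simps)
      moreover have "b j + (-1) ^ p * b (j + q) =
          (ln_Gamma (real (j + 1) / real (2*q)) + ln_Gamma (real (j + q + 1) / real (2*q)))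
          - (ln_Gamma (real j / real (2*q)) + ln_Gamma (real (j + q) / real (2*q)))"
        using True unfolding b_def by (simp add: algebra_simps)
      ultimately show ?thesis unfolding d1 d2 by (simp add: algebra_simps)
    qed
    have "(\<Sum>j=1..q. w ^ (j - 1) * complex_of_real (b j + (-1) ^ p * b (j + q)))
        = (\<Sum>j=1..q. w ^ (j - 1) * complex_of_real (E_coef j p q) - complex_of_real (ln 2 / real q) * w ^ (j - 1))"
    proof (intro sum.cong refl)
      fix j assume jj: "j \<in> {1..q}"
      show "w ^ (j - 1) * complex_of_real (b j + (-1) ^ p * b (j + q))
          = w ^ (j - 1) * complex_of_real (E_coef j p q) - complex_of_real (ln 2 / real q) * w ^ (j - 1)"
        unfolding Ej[OF jj] of_real_diff by (simp only: algebra_simps)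
    qed
    also have "\<dots> = (\<Sum>j=1..q. w ^ (j - 1) * complex_of_real (E_coef j p q))
        - complex_of_real (ln 2 / real q) * (\<Sum>j=1..q. w ^ (j - 1))"
      by (simp only: sum_subtractf sum_distrib_left)
    finally show ?thesis unfolding R geo by simp
  qed
qed


theorem theorem29:
  fixes p q :: nat and \<omega> :: complex
  assumes "p > 0" "q > 0" "coprime p q"
    and "\<omega> = exp (\<i> * of_real pi * of_nat p / of_nat q)"
    and "\<omega> \<noteq> 1"
  shows "gamma_fun \<omega> + Ln (1 - \<omega>) / \<omega> = (\<Sum>j=1..q. \<omega> ^ (j - 1) * complex_of_real (E_coef j p q)) \<and>
         (\<Sum>j=1..q. \<omega> ^ (j - 1) * complex_of_real (E_coef j p q)) =
         (\<Sum>j=1..2*q. \<omega> ^ (j - 1) * complex_of_real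
            (ln (Gamma (real (j + 1) / real (2*q)) / Gamma (real j / real (2*q)))))"
proof -
  have q: "q > 0" using assms(2) .
  have w: "\<omega> = exp (\<i> * of_real pi * of_nat p / of_nat q)" using assms(4) .
  have w1: "\<omega> \<noteq> 1" using assms(5) .
  have nw: "norm \<omega> = 1" unfolding w by simp
  have wq: "\<omega> ^ q = (-1) ^ p"
  proof -
    have "\<omega> ^ q = exp (of_nat q * (\<i> * of_real pi * of_nat p / of_nat q))"
      unfolding w by (rule exp_of_nat_mult[symmetric])
    also have "of_nat q * (\<i> * of_real pi * of_nat p / of_nat q) = of_nat p * (\<i> * of_real pi)"
      using q by (simp add: field_simps)
    also have "exp (of_nat p * (\<i> * of_real pi)) = (-1) ^ p"
      by (simp only: exp_of_nat_mult exp_pi_i')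
    finally show ?thesis .
  qed
  have w2q: "\<omega> ^ (2 * q) = 1"
  proof -
    have "\<omega> ^ (2 * q) = (\<omega> ^ q) ^ 2" by (simp add: power_mult[symmetric] mult.commute)
    also have "\<dots> = 1" unfolding wq by (simp add: power_mult[symmetric] mult.commute[of p 2] power_mult)
    finally show ?thesis .
  qed
  have P1: "gamma_fun \<omega> + Ln (1 - \<omega>) / \<omega> =
    (\<Sum>j=1..2*q. \<omega> ^ (j - 1) * complex_of_real (ln_Gamma (real (j + 1) / real (2*q)) - ln_Gamma (real j / real (2*q))))"
    by (rule part1) (use q nw w1 w2q in auto)
  also have "\<dots> = (\<Sum>j=1..2*q. \<omega> ^ (j - 1) * complex_of_real
            (ln (Gamma (real (j + 1) / real (2*q)) / Gamma (real j / real (2*q)))))"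
    using q by (intro sum.cong refl) (auto simp: ln_Gamma_ratio)
  finally have P1': "gamma_fun \<omega> + Ln (1 - \<omega>) / \<omega> = (\<Sum>j=1..2*q. \<omega> ^ (j - 1) * complex_of_real
            (ln (Gamma (real (j + 1) / real (2*q)) / Gamma (real j / real (2*q)))))" .
  have P2: "(\<Sum>j=1..q. \<omega> ^ (j - 1) * complex_of_real (E_coef j p q)) =
         (\<Sum>j=1..2*q. \<omega> ^ (j - 1) * complex_of_real
            (ln (Gamma (real (j + 1) / real (2*q)) / Gamma (real j / real (2*q)))))"
    by (rule part2[OF q wq w1])
  show ?thesis using P1' P2 by simp
qed

end
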